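(* Let $k,m,n,l$ be positive integers with $nl+ml\le k$ and $q$ a prime power. Let $\mathbb{L}$ be the set of $l$-dimensional subspaces of $\mathbb{F}_q^k$ and let $\mathbb{X}=\{\{L_1,\dots,L_n\}\subseteq\mathbb{L}:\dim(L_1+\cdots+L_n)=nl\}$, $\mathbb{Y}=\{\{L_1,\dots,L_m\}\subseteq\mathbb{L}:\dim(L_1+\cdots+L_m)=ml\}$, $\mathbb{Z}=\{\{L_1,\dots,L_{n+m}\}\subseteq\mathbb{L}:\dim(L_1+\cdots+L_{n+m})=(n+m)l\}$. Let $B$ be the bipartite graph with left vertex set $\mathbb{X}$, right vertex set $\mathbb{Y}$, and $X$ adjacent to $Y$ iff $X\cup Y\in\mathbb{Z}$. Put $P=\prod_{i=0}^{l-1}\binom{l-i}{1}_q$, $y_1=\prod_{i=0}^{n-1}\binom{(n-i)l}{l}$, $y_2=\prod_{i=0}^{m-1}\binom{(m-i)l}{l}$. Then $$|\mathbb{X}|=\frac{(l!)^n q^{\frac{n(n-1)l^2}{2}}}{(nl)!\,n!}\cdot\frac{\prod_{i=0}^{nl-1}\binom{k-i}{1}_q}{P^n}\,y_1,\qquad |\mathbb{Y}|=\frac{(l!)^m q^{\frac{m(m-1)l^2}{2}}}{(ml)!\,m!}\cdot\frac{\prod_{i=0}^{ml-1}\binom{k-i}{1}_q}{P^m}\,y_2,$$ and every $X\in\mathbb{X}$ has exactly $$\frac{(l!)^m q^{ml^2\left(\frac{m-1}{2}+n\right)}}{(ml)!\,m!}\cdot\frac{\prod_{i=0}^{ml-1}\binom{k-nl-i}{1}_q}{P^m}\,y_2$$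 neighbours in $B$.
   Context: $\binom{a}{1}_q=\frac{q^a-1}{q-1}$; $\binom{(n-i)l}{l}$ etc. are ordinary binomial coefficients. *)

theory Defs
  imports "HOL-Analysis.Analysis"
begin

definition qbin1 :: "nat \<Rightarrow> nat \<Rightarrow> real" where
  "qbin1 q a = (real q ^ a - 1) / (real q - 1)"

text \<open>The set of l-dimensional subspaces of the space F^k, modelled as 'a^'n
  with 'a a finite field and k = CARD('n).\<close>
definition subspaces_dim :: "nat \<Rightarrow> (('a::field)^'n) set set" where
  "subspaces_dim l = {V. vec.subspace V \<and> vec.dim V = l}"

text \<open>Sets of r distinct l-dimensional subspaces whose sum has dimension r*l.
  The sum of the subspaces in S is the span of their union.\<close>
definition indep_family :: "nat \<Rightarrow> nat \<Rightarrow> (('a::field)^'n) set set set" where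
  "indep_family l r = {S. S \<subseteq> subspaces_dim l \<and> card S = r \<and>
       vec.dim (vec.span (\<Union>S)) = r * l}"

end

theory Submission imports Defs "HOL-Combinatorics.Multiset_Permutations" begin

lemma card_span_indep:
  fixes B :: "('a::{finite,field}^'n) set"
  assumes "vec.independent B"
  shows "card (vec.span B) = CARD('a) ^ card B"
proof -
  have "finite B" by simp
  then show ?thesis using assms
  proof (induction B rule: finite_induct)
    case empty then show ?case by simp
  next
    case (insert v B)
    have indB: "vec.independent B" using insert.prems vec.independent_mono by blast
    have vB: "v \<notin> vec.span B" using insert.prems insert.hyps(2) by (simp add: vec.independent_insert)
    have eq: "vec.span (insert v B) = (\<lambda>(c,y). c *s v + y) ` (UNIV \<times> vec.span B)"
    proof
      show "vec.span (insert v B) \<subseteq> (\<lambda>(c,y). c *s v + y) ` (UNIV \<times> vec.span B)"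
      proof
        fix x assume "x \<in> vec.span (insert v B)"
        then obtain c where "x - c *s v \<in> vec.span B" using vec.span_insert by blast
        then show "x \<in> (\<lambda>(c,y). c *s v + y) ` (UNIV \<times> vec.span B)"
          by (intro image_eqI[of _ _ "(c, x - c *s v)"]) auto
      qed
    next
      show "(\<lambda>(c,y). c *s v + y) ` (UNIV \<times> vec.span B) \<subseteq> vec.span (insert v B)"
      proof clarify
        fix c y assume y: "y \<in> vec.span B"
        have "y \<in> vec.span (insert v B)" using y vec.span_mono[of B "insert v B"] by blast
        moreover have "v \<in> vec.span (insert v B)" by (simp add: vec.span_base)
        ultimately show "c *s v + y \<in> vec.span (insert v B)"
          by (simp add: vec.span_add vec.span_scale)
      qed
    qed
    have inj: "inj_on (\<lambda>(c,y). c *s v + y) (UNIV \<times> vec.span B)"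
    proof (rule inj_onI, clarsimp)
      fix c1 y1 c2 y2
      assume y1: "y1 \<in> vec.span B" and y2: "y2 \<in> vec.span B" and e: "c1 *s v + y1 = c2 *s v + y2"
      have "(c1 - c2) *s v = y2 - y1" using e by (simp add: algebra_simps vector_sub_rdistrib)
      show "c1 = c2 \<and> y1 = y2"
      proof (cases "c1 = c2")
        case True then show ?thesis using e by simp
      next
        case False
        have gen: "\<And>d::'a. d \<noteq> 0 \<Longrightarrow> v = inverse d *s (d *s v)" by (simp add: vector_smult_assoc)
        have "v = inverse (c1 - c2) *s ((c1 - c2) *s v)" by (rule gen) (use False in simp)
        also have "\<dots> \<in> vec.span B" using \<open>(c1 - c2) *s v = y2 - y1\<close> y1 y2
          by (simp add: vec.span_diff vec.span_scale)
        finally show ?thesis using vB by simp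
      qed
    qed
    have "card (vec.span (insert v B)) = card ((UNIV :: 'a set) \<times> vec.span B)"
      using eq inj card_image by metis
    also have "\<dots> = card (UNIV :: 'a set) * card (vec.span B)" by (rule card_cartesian_product)
    finally show ?case using insert indB by simp
  qed
qed

lemma card_subspace:
  fixes U :: "('a::{finite,field}^'n) set"
  assumes "vec.subspace U" shows "card U = CARD('a) ^ vec.dim U"
proof -
  obtain B where B: "B \<subseteq> U" "vec.independent B" "U \<subseteq> vec.span B" "card B = vec.dim U"
    using vec.basis_exists by blast
  then have "vec.span B = U" using assms vec.span_subspace by blast
  then show ?thesis using card_span_indep[OF B(2)] B(4) by simp
qed

lemma dim_Un_le:
  fixes A B :: "('a::field^'n) set"
  shows "vec.dim (A \<union> B) \<le> vec.dim A + vec.dim B"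
proof -
  obtain BA where A: "BA \<subseteq> A" "vec.independent BA" "A \<subseteq> vec.span BA" "card BA = vec.dim A"
    using vec.basis_exists by blast
  obtain BB where B: "BB \<subseteq> B" "vec.independent BB" "B \<subseteq> vec.span BB" "card BB = vec.dim B"
    using vec.basis_exists by blast
  have fin: "finite (BA \<union> BB)" using A(2) B(2) vec.finiteI_independent by blast
  have "A \<union> B \<subseteq> vec.span (BA \<union> BB)"
    using A(3) B(3) vec.span_mono[of BA "BA \<union> BB"] vec.span_mono[of BB "BA \<union> BB"] by blast
  then have "vec.dim (A \<union> B) \<le> card (BA \<union> BB)" using vec.dim_le_card fin by blast
  also have "\<dots> \<le> card BA + card BB" by (rule card_Un_le)
  finally show ?thesis using A(4) B(4) by simp
qed

lemma dim_set_le_length: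
  fixes vs :: "('a::field^'n) list"
  shows "vec.dim (set vs) \<le> length vs"
proof -
  have "vec.dim (set vs) \<le> card (set vs)" by (rule vec.dim_le_card') simp
  also have "\<dots> \<le> length vs" by (rule card_length)
  finally show ?thesis .
qed

lemma card_indep_lists:
  fixes U W :: "('a::{finite,field}^'n) set"
  assumes U: "vec.subspace U" and WU: "W \<subseteq> U"
  shows "real (card {vs. length vs = r \<and> set vs \<subseteq> U \<and> vec.dim (W \<union> set vs) = vec.dim W + r})
        = (\<Prod>i<r. real CARD('a) ^ vec.dim U - real CARD('a) ^ (vec.dim W + i))"
  using WU
proof (induction r arbitrary: W)
  case 0
  have "{vs. length vs = 0 \<and> set vs \<subseteq> U \<and> vec.dim (W \<union> set vs) = vec.dim W + 0} = {[]}" by auto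
  then show ?case by simp
next
  case (Suc r)
  define S where "S = (\<lambda>W. {vs. length vs = r \<and> set vs \<subseteq> U \<and> vec.dim (W \<union> set vs) = vec.dim W + r})"
  have finS: "finite (S W')" for W'
  proof -
    have "S W' \<subseteq> {vs. set vs \<subseteq> UNIV \<and> length vs = r}" unfolding S_def by auto
    moreover have "finite {vs. set vs \<subseteq> (UNIV :: ('a^'n) set) \<and> length vs = r}"
      by (rule finite_lists_length_eq) simp
    ultimately show ?thesis by (rule finite_subset)
  qed
  have eq: "{vs. length vs = Suc r \<and> set vs \<subseteq> U \<and> vec.dim (W \<union> set vs) = vec.dim W + Suc r}
      = (\<lambda>(v,vs). v # vs) ` (SIGMA v:U - vec.span W. S (insert v W))"
  proof
    show "{vs. length vs = Suc r \<and> set vs \<subseteq> U \<and> vec.dim (W \<union> set vs) = vec.dim W + Suc r}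
      \<subseteq> (\<lambda>(v,vs). v # vs) ` (SIGMA v:U - vec.span W. S (insert v W))"
    proof
      fix xs assume xs: "xs \<in> {vs. length vs = Suc r \<and> set vs \<subseteq> U \<and> vec.dim (W \<union> set vs) = vec.dim W + Suc r}"
      then obtain v vs where xsv: "xs = v # vs" by (cases xs) auto
      have lv: "length vs = r" and vU: "v \<in> U" and vsU: "set vs \<subseteq> U"
        and d: "vec.dim (insert v W \<union> set vs) = vec.dim W + Suc r"
        using xs xsv by auto
      have a: "vec.dim (insert v W) \<le> vec.dim W + 1" by (simp add: vec.dim_insert)
      have b: "vec.dim (insert v W \<union> set vs) \<le> vec.dim (insert v W) + r"
        using dim_Un_le[of "insert v W" "set vs"] dim_set_le_length[of vs] lv by simp
      have c1: "vec.dim (insert v W) = vec.dim W + 1" using a b d by simp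
      then have "v \<notin> vec.span W" by (simp add: vec.dim_insert split: if_splits)
      moreover have "vs \<in> S (insert v W)" unfolding S_def using lv vsU d c1 by simp
      ultimately show "xs \<in> (\<lambda>(v,vs). v # vs) ` (SIGMA v:U - vec.span W. S (insert v W))"
        using xsv vU by force
    qed
  next
    show "(\<lambda>(v,vs). v # vs) ` (SIGMA v:U - vec.span W. S (insert v W))
       \<subseteq> {vs. length vs = Suc r \<and> set vs \<subseteq> U \<and> vec.dim (W \<union> set vs) = vec.dim W + Suc r}"
    proof clarify
      fix v vs assume v: "v \<in> U" "v \<notin> vec.span W" and vs: "vs \<in> S (insert v W)"
      have "vec.dim (insert v W) = vec.dim W + 1" using v by (simp add: vec.dim_insert)
      moreover have "W \<union> set (v # vs) = insert v W \<union> set vs" by auto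
      ultimately show "length (v # vs) = Suc r \<and> set (v # vs) \<subseteq> U \<and> vec.dim (W \<union> set (v # vs)) = vec.dim W + Suc r"
        using vs v unfolding S_def by simp
    qed
  qed
  have inj: "inj_on (\<lambda>(v,vs). v # vs) (SIGMA v:U - vec.span W. S (insert v W))"
    by (rule inj_onI) auto
  have sW: "vec.span W \<subseteq> U" using Suc.prems U vec.span_minimal by blast
  have cardUW: "real (card (U - vec.span W)) = real CARD('a) ^ vec.dim U - real CARD('a) ^ vec.dim W"
  proof -
    have "card (U - vec.span W) = card U - card (vec.span W)" using sW by (simp add: card_Diff_subset)
    moreover have "card (vec.span W) \<le> card U" using sW by (simp add: card_mono)
    ultimately have "real (card (U - vec.span W)) = real (card U) - real (card (vec.span W))" by simp
    also have "\<dots> = real CARD('a) ^ vec.dim U - real CARD('a) ^ vec.dim W"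
      using card_subspace[OF U] card_subspace[OF vec.subspace_span, of W] by simp
    finally show ?thesis .
  qed
  have IH: "real (card (S (insert v W))) = (\<Prod>i<r. real CARD('a) ^ vec.dim U - real CARD('a) ^ (vec.dim W + Suc i))"
    if "v \<in> U - vec.span W" for v
  proof -
    have "vec.dim (insert v W) = vec.dim W + 1" using that by (simp add: vec.dim_insert)
    moreover have "insert v W \<subseteq> U" using that Suc.prems by auto
    ultimately show ?thesis using Suc.IH[of "insert v W"] unfolding S_def by simp
  qed
  have "real (card {vs. length vs = Suc r \<and> set vs \<subseteq> U \<and> vec.dim (W \<union> set vs) = vec.dim W + Suc r})
      = real (card (SIGMA v:U - vec.span W. S (insert v W)))"
    unfolding eq using inj by (simp add: card_image)
  also have "\<dots> = (\<Sum>v\<in>U - vec.span W. real (card (S (insert v W))))"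
    using finS by (simp add: card_SigmaI)
  also have "\<dots> = (\<Sum>v\<in>U - vec.span W. (\<Prod>i<r. real CARD('a) ^ vec.dim U - real CARD('a) ^ (vec.dim W + Suc i)))"
    using IH by (rule sum.cong[OF refl])
  also have "\<dots> = (real CARD('a) ^ vec.dim U - real CARD('a) ^ vec.dim W) * (\<Prod>i<r. real CARD('a) ^ vec.dim U - real CARD('a) ^ (vec.dim W + Suc i))"
    using cardUW by simp
  also have "\<dots> = (\<Prod>i<Suc r. real CARD('a) ^ vec.dim U - real CARD('a) ^ (vec.dim W + i))"
    by (subst prod.lessThan_Suc_shift) simp
  finally show ?case .
qed


lemma dim_Un_span:
  fixes W S :: "('a::field^'n) set"
  shows "vec.dim (W \<union> vec.span S) = vec.dim (W \<union> S)"
proof (rule vec.span_eq_dim)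
  show "vec.span (W \<union> vec.span S) = vec.span (W \<union> S)"
  proof (rule antisym)
    have "W \<union> vec.span S \<subseteq> vec.span (W \<union> S)"
      using vec.span_superset[of "W \<union> S"] vec.span_mono[of S "W \<union> S"] by blast
    then show "vec.span (W \<union> vec.span S) \<subseteq> vec.span (W \<union> S)"
      using vec.span_minimal vec.subspace_span by blast
    show "vec.span (W \<union> S) \<subseteq> vec.span (W \<union> vec.span S)"
      using vec.span_superset[of S] by (intro vec.span_mono) blast
  qed
qed

lemma card_Q_ge2: "2 \<le> CARD('a::{finite,field})"
proof -
  have "card {0::'a, 1} \<le> CARD('a)" by (rule card_mono) auto
  then show ?thesis by simp
qed

lemma N_pos: "0 < (\<Prod>i<l. real CARD('a::{finite,field}) ^ l - real CARD('a) ^ i)"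
proof (rule prod_pos)
  fix i assume "i \<in> {..<l}"
  then have "i < l" by simp
  moreover have "1 < real CARD('a)" using card_Q_ge2[where 'a='a] by simp
  ultimately show "0 < real CARD('a) ^ l - real CARD('a) ^ i"
    by (simp add: power_strict_increasing)
qed

lemma card_sub_avoid:
  fixes W :: "('a::{finite,field}^'n) set"
  shows "real (card {L \<in> (subspaces_dim l :: ('a^'n) set set). vec.dim (W \<union> L) = vec.dim W + l})
         * (\<Prod>i<l. real CARD('a) ^ l - real CARD('a) ^ i)
       = (\<Prod>i<l. real CARD('a) ^ CARD('n) - real CARD('a) ^ (vec.dim W + i))"
proof -
  define C where "C = {L \<in> (subspaces_dim l :: ('a^'n) set set). vec.dim (W \<union> L) = vec.dim W + l}"
  define B where "B = (\<lambda>L::('a^'n) set. {vs. length vs = l \<and> set vs \<subseteq> L \<and> vec.dim ({} \<union> set vs) = vec.dim ({}::('a^'n) set) + l})"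
  define V where "V = {vs. length vs = l \<and> set vs \<subseteq> (UNIV::('a^'n) set) \<and> vec.dim (W \<union> set vs) = vec.dim W + l}"
  have cardB: "real (card (B L)) = (\<Prod>i<l. real CARD('a) ^ l - real CARD('a) ^ i)" if "L \<in> C" for L
  proof -
    have "vec.subspace L" "vec.dim L = l" using that unfolding C_def subspaces_dim_def by auto
    then show ?thesis unfolding B_def using card_indep_lists[of L "{}" l] by simp
  qed
  have cardV: "real (card V) = (\<Prod>i<l. real CARD('a) ^ CARD('n) - real CARD('a) ^ (vec.dim W + i))"
    unfolding V_def using card_indep_lists[of UNIV W l] by (simp add: card_cart_basis)
  have finB: "finite (B L)" for L
  proof -
    have "B L \<subseteq> {vs. set vs \<subseteq> UNIV \<and> length vs = l}" unfolding B_def by auto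
    moreover have "finite {vs. set vs \<subseteq> (UNIV :: ('a^'n) set) \<and> length vs = l}"
      by (rule finite_lists_length_eq) simp
    ultimately show ?thesis by (rule finite_subset)
  qed
  have VU: "V = \<Union> (B ` C)"
  proof
    show "V \<subseteq> \<Union> (B ` C)"
    proof
      fix vs assume vs: "vs \<in> V"
      have l: "length vs = l" and d: "vec.dim (W \<union> set vs) = vec.dim W + l" using vs unfolding V_def by auto
      have "vec.dim (W \<union> set vs) \<le> vec.dim W + vec.dim (set vs)" by (rule dim_Un_le)
      moreover have "vec.dim (set vs) \<le> l" using dim_set_le_length[of vs] l by simp
      ultimately have ds: "vec.dim (set vs) = l" using d by simp
      let ?L = "vec.span (set vs)"
      have "?L \<in> C" unfolding C_def subspaces_dim_def
        using ds d dim_Un_span[of W "set vs"] by (simp add: vec.subspace_span)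
      moreover have "vs \<in> B ?L" unfolding B_def using l ds vec.span_superset by auto
      ultimately show "vs \<in> \<Union> (B ` C)" by blast
    qed
  next
    show "\<Union> (B ` C) \<subseteq> V"
    proof clarify
      fix L vs assume L: "L \<in> C" and vs: "vs \<in> B L"
      have sL: "vec.subspace L" "vec.dim L = l" "vec.dim (W \<union> L) = vec.dim W + l"
        using L unfolding C_def subspaces_dim_def by auto
      have l: "length vs = l" "set vs \<subseteq> L" "vec.dim (set vs) = l" using vs unfolding B_def by auto
      have "vec.span (set vs) = vec.span L" using l sL by (intro vec.dim_eq_span) auto
      then have "vec.span (set vs) = L" using sL by simp
      then have "vec.dim (W \<union> set vs) = vec.dim W + l" using dim_Un_span[of W "set vs"] sL by simp
      then show "vs \<in> V" unfolding V_def using l by simp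
    qed
  qed
  have disj: "\<forall>L1\<in>C. \<forall>L2\<in>C. L1 \<noteq> L2 \<longrightarrow> B L1 \<inter> B L2 = {}"
  proof (intro ballI impI)
    fix L1 L2 assume L1: "L1 \<in> C" and L2: "L2 \<in> C" and ne: "L1 \<noteq> L2"
    have key: "vec.span (set vs) = L" if "L \<in> C" "vs \<in> B L" for L vs
    proof -
      have sL: "vec.subspace L" "vec.dim L = l" using that unfolding C_def subspaces_dim_def by auto
      have l: "set vs \<subseteq> L" "vec.dim (set vs) = l" using that unfolding B_def by auto
      have "vec.span (set vs) = vec.span L" using l sL by (intro vec.dim_eq_span) auto
      then show ?thesis using sL by simp
    qed
    show "B L1 \<inter> B L2 = {}" using key[OF L1] key[OF L2] ne by blast
  qed
  have "card V = (\<Sum>L\<in>C. card (B L))"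
    unfolding VU by (rule card_UN_disjoint) (use finB disj in auto)
  then have "real (card V) = (\<Sum>L\<in>C. real (card (B L)))" by simp
  also have "\<dots> = (\<Sum>L\<in>C. (\<Prod>i<l. real CARD('a) ^ l - real CARD('a) ^ i))"
    using cardB by (rule sum.cong[OF refl])
  also have "\<dots> = real (card C) * (\<Prod>i<l. real CARD('a) ^ l - real CARD('a) ^ i)" by simp
  finally show ?thesis using cardV unfolding C_def by simp
qed

lemma dim_Union_le:
  fixes W :: "('a::{finite,field}^'n) set"
  assumes "S \<subseteq> (subspaces_dim l :: ('a^'n) set set)"
  shows "vec.dim (W \<union> \<Union>S) \<le> vec.dim W + card S * l"
proof -
  have "finite S" by simp
  then show ?thesis using assms
  proof (induction S arbitrary: W rule: finite_induct)
    case empty then show ?case by simp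
  next
    case (insert L S)
    have dL: "vec.dim L = l" using insert.prems unfolding subspaces_dim_def by auto
    have "vec.dim (W \<union> \<Union>(insert L S)) = vec.dim ((W \<union> L) \<union> \<Union>S)" by (simp add: Un_assoc)
    also have "\<dots> \<le> vec.dim (W \<union> L) + card S * l" using insert by simp
    also have "\<dots> \<le> vec.dim W + l + card S * l" using dim_Un_le[of W L] dL by simp
    finally show ?case using insert by simp
  qed
qed


definition cnt :: "nat \<Rightarrow> nat \<Rightarrow> nat \<Rightarrow> nat \<Rightarrow> real" where
  "cnt Q k l d = (\<Prod>i<l. real Q ^ k - real Q ^ (d + i)) / (\<Prod>i<l. real Q ^ l - real Q ^ i)"

lemma card_C:
  fixes W :: "('a::{finite,field}^'n) set"
  shows "real (card {L \<in> (subspaces_dim l :: ('a^'n) set set). vec.dim (W \<union> L) = vec.dim W + l})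
       = cnt CARD('a) CARD('n) l (vec.dim W)"
proof -
  have a: "real (card {L \<in> (subspaces_dim l :: ('a^'n) set set). vec.dim (W \<union> L) = vec.dim W + l})
         * (\<Prod>i<l. real CARD('a) ^ l - real CARD('a) ^ i)
       = (\<Prod>i<l. real CARD('a) ^ CARD('n) - real CARD('a) ^ (vec.dim W + i))"
    by (rule card_sub_avoid)
  have b: "(\<Prod>i<l. real CARD('a) ^ l - real CARD('a) ^ i) \<noteq> 0"
    using N_pos[where 'a='a and l=l] by linarith
  show ?thesis unfolding cnt_def using a b by (simp only: eq_divide_eq if_True not_False_eq_True)
qed

lemma card_G:
  fixes W :: "('a::{finite,field}^'n) set"
  shows "real (card {Ls. length Ls = r \<and> set Ls \<subseteq> (subspaces_dim l :: ('a^'n) set set) \<and>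
            vec.dim (W \<union> \<Union>(set Ls)) = vec.dim W + r * l})
       = (\<Prod>j<r. cnt CARD('a) CARD('n) l (vec.dim W + j * l))"
proof (induction r arbitrary: W)
  case 0
  have "{Ls. length Ls = 0 \<and> set Ls \<subseteq> (subspaces_dim l :: ('a^'n) set set) \<and>
            vec.dim (W \<union> \<Union>(set Ls)) = vec.dim W + 0 * l} = {[]}" by auto
  then show ?case by simp
next
  case (Suc r)
  define G where "G = (\<lambda>W::('a^'n) set. {Ls. length Ls = r \<and> set Ls \<subseteq> (subspaces_dim l :: ('a^'n) set set) \<and>
            vec.dim (W \<union> \<Union>(set Ls)) = vec.dim W + r * l})"
  define C where "C = {L \<in> (subspaces_dim l :: ('a^'n) set set). vec.dim (W \<union> L) = vec.dim W + l}"
  have finG: "finite (G W')" for W'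
  proof -
    have "G W' \<subseteq> {vs. set vs \<subseteq> UNIV \<and> length vs = r}" unfolding G_def by auto
    moreover have "finite {vs. set vs \<subseteq> (UNIV :: ('a^'n) set set) \<and> length vs = r}"
      by (rule finite_lists_length_eq) simp
    ultimately show ?thesis by (rule finite_subset)
  qed
  have eq: "{Ls. length Ls = Suc r \<and> set Ls \<subseteq> (subspaces_dim l :: ('a^'n) set set) \<and>
            vec.dim (W \<union> \<Union>(set Ls)) = vec.dim W + Suc r * l}
      = (\<lambda>(L,Ls). L # Ls) ` (SIGMA L:C. G (W \<union> L))"
  proof
    show "{Ls. length Ls = Suc r \<and> set Ls \<subseteq> (subspaces_dim l :: ('a^'n) set set) \<and>
            vec.dim (W \<union> \<Union>(set Ls)) = vec.dim W + Suc r * l}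
      \<subseteq> (\<lambda>(L,Ls). L # Ls) ` (SIGMA L:C. G (W \<union> L))"
    proof
      fix xs assume xs: "xs \<in> {Ls. length Ls = Suc r \<and> set Ls \<subseteq> (subspaces_dim l :: ('a^'n) set set) \<and>
            vec.dim (W \<union> \<Union>(set Ls)) = vec.dim W + Suc r * l}"
      then obtain L Ls where xsv: "xs = L # Ls" by (cases xs) auto
      have lv: "length Ls = r" and LS: "L \<in> subspaces_dim l" and LsS: "set Ls \<subseteq> subspaces_dim l"
        and d: "vec.dim ((W \<union> L) \<union> \<Union>(set Ls)) = vec.dim W + Suc r * l"
        using xs xsv by (auto simp: Un_assoc)
      have dL: "vec.dim L = l" using LS unfolding subspaces_dim_def by auto
      have a: "vec.dim (W \<union> L) \<le> vec.dim W + l" using dim_Un_le[of W L] dL by simp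
      have "vec.dim ((W \<union> L) \<union> \<Union>(set Ls)) \<le> vec.dim (W \<union> L) + card (set Ls) * l"
        using dim_Union_le[OF LsS] by blast
      also have "\<dots> \<le> vec.dim (W \<union> L) + r * l" using card_length[of Ls] lv by simp
      finally have b: "vec.dim ((W \<union> L) \<union> \<Union>(set Ls)) \<le> vec.dim (W \<union> L) + r * l" .
      have c1: "vec.dim (W \<union> L) = vec.dim W + l" using a b d by simp
      then have "L \<in> C" unfolding C_def using LS by simp
      moreover have "Ls \<in> G (W \<union> L)" unfolding G_def using lv LsS d c1 by simp
      ultimately show "xs \<in> (\<lambda>(L,Ls). L # Ls) ` (SIGMA L:C. G (W \<union> L))"
        using xsv by force
    qed
  next
    show "(\<lambda>(L,Ls). L # Ls) ` (SIGMA L:C. G (W \<union> L)) \<subseteq>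
        {Ls. length Ls = Suc r \<and> set Ls \<subseteq> (subspaces_dim l :: ('a^'n) set set) \<and>
            vec.dim (W \<union> \<Union>(set Ls)) = vec.dim W + Suc r * l}"
    proof clarify
      fix L Ls assume L: "L \<in> C" and Ls: "Ls \<in> G (W \<union> L)"
      have "W \<union> \<Union>(set (L # Ls)) = (W \<union> L) \<union> \<Union>(set Ls)" by auto
      then show "length (L # Ls) = Suc r \<and> set (L # Ls) \<subseteq> subspaces_dim l \<and>
            vec.dim (W \<union> \<Union>(set (L # Ls))) = vec.dim W + Suc r * l"
        using L Ls unfolding C_def G_def by simp
    qed
  qed
  have inj: "inj_on (\<lambda>(L,Ls). L # Ls) (SIGMA L:C. G (W \<union> L))"
    by (rule inj_onI) auto
  have IH: "real (card (G (W \<union> L))) = (\<Prod>j<r. cnt CARD('a) CARD('n) l (vec.dim W + Suc j * l))"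
    if "L \<in> C" for L
  proof -
    have "vec.dim (W \<union> L) = vec.dim W + l" using that unfolding C_def by simp
    then show ?thesis using Suc.IH[of "W \<union> L"] unfolding G_def by (simp add: add.assoc)
  qed
  have "real (card {Ls. length Ls = Suc r \<and> set Ls \<subseteq> (subspaces_dim l :: ('a^'n) set set) \<and>
            vec.dim (W \<union> \<Union>(set Ls)) = vec.dim W + Suc r * l})
      = real (card (SIGMA L:C. G (W \<union> L)))"
    unfolding eq using inj by (simp add: card_image)
  also have "\<dots> = (\<Sum>L\<in>C. real (card (G (W \<union> L))))"
    using finG by (simp add: card_SigmaI)
  also have "\<dots> = (\<Sum>L\<in>C. (\<Prod>j<r. cnt CARD('a) CARD('n) l (vec.dim W + Suc j * l)))"
    using IH by (rule sum.cong[OF refl])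
  also have "\<dots> = cnt CARD('a) CARD('n) l (vec.dim W) * (\<Prod>j<r. cnt CARD('a) CARD('n) l (vec.dim W + Suc j * l))"
    using card_C[where W=W and l=l] unfolding C_def by simp
  also have "\<dots> = (\<Prod>j<Suc r. cnt CARD('a) CARD('n) l (vec.dim W + j * l))"
    by (subst prod.lessThan_Suc_shift) simp
  finally show ?case .
qed

lemma card_F:
  fixes W :: "('a::{finite,field}^'n) set"
  assumes l: "0 < l"
  shows "real (card {S. S \<subseteq> (subspaces_dim l :: ('a^'n) set set) \<and> card S = r \<and>
            vec.dim (W \<union> \<Union>S) = vec.dim W + r * l}) * fact r
       = (\<Prod>j<r. cnt CARD('a) CARD('n) l (vec.dim W + j * l))"
proof -
  define F where "F = {S. S \<subseteq> (subspaces_dim l :: ('a^'n) set set) \<and> card S = r \<and>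
            vec.dim (W \<union> \<Union>S) = vec.dim W + r * l}"
  define G where "G = {Ls. length Ls = r \<and> set Ls \<subseteq> (subspaces_dim l :: ('a^'n) set set) \<and>
            vec.dim (W \<union> \<Union>(set Ls)) = vec.dim W + r * l}"
  have GU: "G = \<Union> (permutations_of_set ` F)"
  proof
    show "G \<subseteq> \<Union> (permutations_of_set ` F)"
    proof
      fix Ls assume Ls: "Ls \<in> G"
      have lv: "length Ls = r" and LsS: "set Ls \<subseteq> subspaces_dim l"
        and d: "vec.dim (W \<union> \<Union>(set Ls)) = vec.dim W + r * l" using Ls unfolding G_def by auto
      have dist: "distinct Ls"
      proof (rule ccontr)
        assume "\<not> distinct Ls"
        then have "card (set Ls) \<noteq> length Ls" using card_distinct by blast
        then have "card (set Ls) < r" using card_length[of Ls] lv by simp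
        then have "card (set Ls) * l < r * l" using l by simp
        moreover have "vec.dim (W \<union> \<Union>(set Ls)) \<le> vec.dim W + card (set Ls) * l"
          using dim_Union_le[OF LsS] by blast
        ultimately show False using d by simp
      qed
      have "set Ls \<in> F" unfolding F_def using LsS d lv dist distinct_card by fastforce
      moreover have "Ls \<in> permutations_of_set (set Ls)" using dist by (simp add: permutations_of_set_def)
      ultimately show "Ls \<in> \<Union> (permutations_of_set ` F)" by blast
    qed
  next
    show "\<Union> (permutations_of_set ` F) \<subseteq> G"
    proof clarify
      fix S Ls assume S: "S \<in> F" and Ls: "Ls \<in> permutations_of_set S"
      have "set Ls = S" "distinct Ls" using Ls by (auto simp: permutations_of_set_def)
      then show "Ls \<in> G" using S distinct_card[of Ls] unfolding F_def G_def by auto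
    qed
  qed
  have "card G = (\<Sum>S\<in>F. card (permutations_of_set S))"
    unfolding GU
  proof (rule card_UN_disjoint)
    show "\<forall>A\<in>F. \<forall>B\<in>F. A \<noteq> B \<longrightarrow> permutations_of_set A \<inter> permutations_of_set B = {}"
      by (auto simp: permutations_of_set_def)
  qed simp_all
  also have "\<dots> = (\<Sum>S\<in>F. fact r)" by (rule sum.cong[OF refl]) (simp add: F_def)
  also have "\<dots> = card F * fact r" by simp
  finally have "real (card G) = real (card F) * fact r" by (simp add: of_nat_mult)
  then show ?thesis using card_G[where W=W and l=l and r=r] unfolding F_def G_def by simp
qed


lemma pow_diff_qbin1:
  assumes Q: "2 \<le> Q" and ba: "b \<le> a"
  shows "real Q ^ a - real Q ^ b = real Q ^ b * (real Q - 1) * qbin1 Q (a - b)"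
proof -
  have "real Q - 1 \<noteq> 0" using Q by simp
  moreover have "real Q ^ a = real Q ^ b * real Q ^ (a - b)" using ba by (simp add: power_add[symmetric])
  ultimately show ?thesis unfolding qbin1_def by (simp add: field_simps)
qed

lemma qbin1_pos:
  assumes Q: "2 \<le> Q" and a: "1 \<le> a"
  shows "0 < qbin1 Q a"
proof -
  have "1 < real Q" using Q by simp
  then have "1 < real Q ^ a" using a by (simp add: one_less_power)
  then show ?thesis unfolding qbin1_def using \<open>1 < real Q\<close> by simp
qed

lemma cnt_eq:
  assumes Q: "2 \<le> Q" and ek: "e + l \<le> k"
  shows "cnt Q k l e = real Q ^ (e * l) * (\<Prod>i<l. qbin1 Q (k - e - i)) / (\<Prod>i<l. qbin1 Q (l - i))"
proof -
  have num: "(\<Prod>i<l. real Q ^ k - real Q ^ (e + i))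
      = real Q ^ (e * l) * (\<Prod>i<l. real Q ^ i * (real Q - 1)) * (\<Prod>i<l. qbin1 Q (k - e - i))"
  proof -
    have "(\<Prod>i<l. real Q ^ k - real Q ^ (e + i)) = (\<Prod>i<l. real Q ^ e * (real Q ^ i * (real Q - 1)) * qbin1 Q (k - e - i))"
    proof (rule prod.cong[OF refl])
      fix i assume "i \<in> {..<l}"
      then have "e + i \<le> k" using ek by simp
      then show "real Q ^ k - real Q ^ (e + i) = real Q ^ e * (real Q ^ i * (real Q - 1)) * qbin1 Q (k - e - i)"
        using pow_diff_qbin1[OF Q, of "e + i" k] by (simp add: power_add diff_diff_left mult.assoc)
    qed
    also have "\<dots> = real Q ^ (e * l) * (\<Prod>i<l. real Q ^ i * (real Q - 1)) * (\<Prod>i<l. qbin1 Q (k - e - i))"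
      by (simp add: prod.distrib power_mult)
    finally show ?thesis .
  qed
  have den: "(\<Prod>i<l. real Q ^ l - real Q ^ i)
      = (\<Prod>i<l. real Q ^ i * (real Q - 1)) * (\<Prod>i<l. qbin1 Q (l - i))"
  proof -
    have "(\<Prod>i<l. real Q ^ l - real Q ^ i) = (\<Prod>i<l. (real Q ^ i * (real Q - 1)) * qbin1 Q (l - i))"
    proof (rule prod.cong[OF refl])
      fix i assume "i \<in> {..<l}"
      then have "i \<le> l" by simp
      then show "real Q ^ l - real Q ^ i = (real Q ^ i * (real Q - 1)) * qbin1 Q (l - i)"
        using pow_diff_qbin1[OF Q, of i l] by simp
    qed
    also have "\<dots> = (\<Prod>i<l. real Q ^ i * (real Q - 1)) * (\<Prod>i<l. qbin1 Q (l - i))"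
      by (simp add: prod.distrib)
    finally show ?thesis .
  qed
  have nz: "(\<Prod>i<l. real Q ^ i * (real Q - 1)) \<noteq> 0" using Q by (simp add: prod_zero_iff)
  have gen: "\<And>a b c d. (b::real) \<noteq> 0 \<Longrightarrow> a * b * c / (b * d) = a * c / d" by simp
  show ?thesis unfolding cnt_def num den by (rule gen[OF nz])
qed

lemma prod_split_add:
  "(\<Prod>t<a + b. f t) = ((\<Prod>t<a. f t) * (\<Prod>i<b. f (a + i :: nat)) :: real)"
  by (induction b) (simp_all add: mult.assoc)

lemma prod_double:
  "(\<Prod>t<r * l. f t) = ((\<Prod>j<r. \<Prod>i<l. f (j * l + i :: nat)) :: real)"
proof (induction r)
  case 0 then show ?case by simp
next
  case (Suc r)
  have "(\<Prod>t<Suc r * l. f t) = (\<Prod>t<r * l + l. f t)" by (simp add: add.commute)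
  also have "\<dots> = (\<Prod>t<r * l. f t) * (\<Prod>i<l. f (r * l + i))" by (rule prod_split_add)
  finally show ?case using Suc by simp
qed

lemma sum_exp:
  fixes r d l :: nat
  shows "2 * (\<Sum>j<r. (d + j * l) * l) = 2 * (r * d * l) + r * (r - 1) * l^2"
proof (induction r)
  case 0 then show ?case by simp
next
  case (Suc r)
  have "2 * (\<Sum>j<Suc r. (d + j * l) * l) = 2 * (\<Sum>j<r. (d + j * l) * l) + 2 * ((d + r * l) * l)" by simp
  also have "\<dots> = 2 * (r * d * l) + r * (r - 1) * l^2 + 2 * ((d + r * l) * l)" using Suc by simp
  also have "\<dots> = 2 * (Suc r * d * l) + Suc r * (Suc r - 1) * l^2"
    by (cases r) (simp_all add: algebra_simps power2_eq_square)
  finally show ?case .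
qed

lemma binom_prod:
  "(\<Prod>i<r. real ((r - i) * l choose l)) * fact l ^ r = fact (r * l)"
proof (induction r)
  case 0 then show ?case by simp
next
  case (Suc r)
  have "(\<Prod>i<Suc r. real ((Suc r - i) * l choose l)) = real ((Suc r) * l choose l) * (\<Prod>i<r. real ((r - i) * l choose l))"
    by (subst prod.lessThan_Suc_shift) simp
  moreover have "fact l * fact (Suc r * l - l) * (Suc r * l choose l) = (fact (Suc r * l) :: nat)"
    by (rule binomial_fact_lemma) simp
  then have "fact l * fact (r * l) * real (Suc r * l choose l) = fact (Suc r * l)"
    by (metis (mono_tags) add_diff_cancel_left' mult_Suc of_nat_fact of_nat_mult)
  ultimately have h1: "(\<Prod>i<Suc r. real ((Suc r - i) * l choose l)) = real (Suc r * l choose l) * (\<Prod>i<r. real ((r - i) * l choose l))"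
    and h2: "fact l * fact (r * l) * real (Suc r * l choose l) = (fact (Suc r * l) :: real)" by blast+
  have "(\<Prod>i<Suc r. real ((Suc r - i) * l choose l)) * fact l ^ Suc r
      = real (Suc r * l choose l) * fact l * ((\<Prod>i<r. real ((r - i) * l choose l)) * fact l ^ r)"
    unfolding h1 power_Suc by (simp only: mult_ac)
  also have "\<dots> = real (Suc r * l choose l) * fact l * fact (r * l)" by (simp only: Suc.IH)
  also have "\<dots> = fact (Suc r * l)" using h2 by (simp only: mult_ac)
  finally show ?case .
qed

lemma final_alg:
  assumes Q: "2 \<le> Q" and dk: "d + r * l \<le> k"
    and c: "x * fact r = (\<Prod>j<r. cnt Q k l (d + j * l))"
    and E: "2 * E = 2 * (r * d * l) + r * (r - 1) * l^2"
  shows "x = (fact l ^ r * real Q ^ E) / (fact (r * l) * fact r)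
           * ((\<Prod>i<r * l. qbin1 Q (k - d - i)) / (\<Prod>i<l. qbin1 Q (l - i)) ^ r)
           * (\<Prod>i<r. real ((r - i) * l choose l))"
proof -
  define P where "P = (\<Prod>i<l. qbin1 Q (l - i))"
  define T where "T = (\<Prod>i<r * l. qbin1 Q (k - d - i))"
  define y where "y = (\<Prod>i<r. real ((r - i) * l choose l))"
  have "0 < P" unfolding P_def by (rule prod_pos) (use qbin1_pos[OF Q] in auto)
  then have Pnz: "P \<noteq> 0" by simp
  have Es: "(\<Sum>j<r. (d + j * l) * l) = E" using sum_exp[where r=r and d=d and l=l] E by simp
  have "(\<Prod>j<r. cnt Q k l (d + j * l))
      = (\<Prod>j<r. real Q ^ ((d + j * l) * l) * (\<Prod>i<l. qbin1 Q (k - (d + j * l) - i)) / P)"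
  proof (rule prod.cong[OF refl])
    fix j assume "j \<in> {..<r}"
    then have "Suc j \<le> r" by simp
    then have "Suc j * l \<le> r * l" by (rule mult_le_mono1)
    then have "d + j * l + l \<le> k" using dk by simp
    then show "cnt Q k l (d + j * l) = real Q ^ ((d + j * l) * l) * (\<Prod>i<l. qbin1 Q (k - (d + j * l) - i)) / P"
      unfolding P_def by (rule cnt_eq[OF Q])
  qed
  also have "\<dots> = (\<Prod>j<r. real Q ^ ((d + j * l) * l)) * (\<Prod>j<r. \<Prod>i<l. qbin1 Q (k - (d + j * l) - i)) / P ^ r"
    by (simp add: prod.distrib prod_dividef)
  also have "(\<Prod>j<r. real Q ^ ((d + j * l) * l)) = real Q ^ E"
    unfolding Es[symmetric] by (rule power_sum[symmetric])
  also have "(\<Prod>j<r. \<Prod>i<l. qbin1 Q (k - (d + j * l) - i)) = T"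
    unfolding T_def prod_double[of "\<lambda>t. qbin1 Q (k - d - t)" r l] by (simp add: diff_diff_left add.assoc)
  finally have x: "x * fact r = real Q ^ E * T / P ^ r" using c by simp
  have y: "y * fact l ^ r = fact (r * l)" unfolding y_def by (rule binom_prod)
  have fr: "(fact r :: real) \<noteq> 0" by simp
  have "x = real Q ^ E * T / P ^ r / fact r" using x fr by (simp only: eq_divide_eq if_True not_False_eq_True)
  also have "\<dots> = (fact l ^ r * real Q ^ E) / (fact (r * l) * fact r) * (T / P ^ r) * y"
  proof -
    have ynz: "y \<noteq> 0" using y by (metis fact_nonzero mult_zero_left)
    have flnz: "(fact l :: real) ^ r \<noteq> 0" by simp
    show ?thesis unfolding y[symmetric] using Pnz ynz flnz fr by (simp add: field_simps)
  qed
  finally show ?thesis unfolding P_def T_def y_def .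
qed


lemma even_prod_pred: "even (n * (n - 1::nat))"
  by (cases n) auto

theorem lemma12:
  fixes k m n l q :: nat
  assumes "0 < k" "0 < m" "0 < n" "0 < l"
    and "n * l + m * l \<le> k"
    and "k = CARD('n::finite)"
    and "q = CARD('a::{finite,field})"
  defines "XX \<equiv> (indep_family l n :: ('a^'n) set set set)"
      and "YY \<equiv> (indep_family l m :: ('a^'n) set set set)"
      and "ZZ \<equiv> (indep_family l (n + m) :: ('a^'n) set set set)"
      and "P \<equiv> (\<Prod>i<l. qbin1 q (l - i))"
      and "y1 \<equiv> (\<Prod>i<n. real ((n - i) * l choose l))"
      and "y2 \<equiv> (\<Prod>i<m. real ((m - i) * l choose l))"
  shows "real (card XX) =
           (fact l ^ n * real q ^ (n * (n - 1) * l^2 div 2)) / (fact (n * l) * fact n)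
           * ((\<Prod>i<n * l. qbin1 q (k - i)) / P ^ n) * y1 \<and>
         real (card YY) =
           (fact l ^ m * real q ^ (m * (m - 1) * l^2 div 2)) / (fact (m * l) * fact m)
           * ((\<Prod>i<m * l. qbin1 q (k - i)) / P ^ m) * y2 \<and>
         (\<forall>X\<in>XX. real (card {Y \<in> YY. X \<union> Y \<in> ZZ}) =
           (fact l ^ m * real q ^ (m * l^2 * (m - 1) div 2 + m * l^2 * n)) / (fact (m * l) * fact m)
           * ((\<Prod>i<m * l. qbin1 q (k - n * l - i)) / P ^ m) * y2)"
proof -
  have Q: "2 \<le> q" using card_Q_ge2[where 'a='a] assms(7) by simp
  have l: "0 < l" by fact
  have fam: "real (card (indep_family l r :: ('a^'n) set set set)) =
           (fact l ^ r * real q ^ (r * (r - 1) * l^2 div 2)) / (fact (r * l) * fact r)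
           * ((\<Prod>i<r * l. qbin1 q (k - i)) / P ^ r) * (\<Prod>i<r. real ((r - i) * l choose l))"
    if rk: "r * l \<le> k" for r
  proof -
    have eq: "(indep_family l r :: ('a^'n) set set set) = {S. S \<subseteq> (subspaces_dim l :: ('a^'n) set set) \<and> card S = r \<and>
            vec.dim ({} \<union> \<Union>S) = vec.dim ({} :: ('a^'n) set) + r * l}"
      unfolding indep_family_def by simp
    have c: "real (card (indep_family l r :: ('a^'n) set set set)) * fact r = (\<Prod>j<r. cnt q k l (0 + j * l))"
      using card_F[where W="{} :: ('a^'n) set" and l=l and r=r, OF l] assms(6,7) eq by simp
    have ev: "2 * (r * (r - 1) * l^2 div 2) = r * (r - 1) * l^2"
      using even_prod_pred[of r] by (simp add: dvd_mult_div_cancel)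
    have "real (card (indep_family l r :: ('a^'n) set set set)) =
           (fact l ^ r * real q ^ (r * (r - 1) * l^2 div 2)) / (fact (r * l) * fact r)
           * ((\<Prod>i<r * l. qbin1 q (k - 0 - i)) / (\<Prod>i<l. qbin1 q (l - i)) ^ r) * (\<Prod>i<r. real ((r - i) * l choose l))"
      by (rule final_alg[OF Q _ c]) (use rk ev in simp_all)
    then show ?thesis unfolding P_def by simp
  qed
  have A: "real (card XX) =
           (fact l ^ n * real q ^ (n * (n - 1) * l^2 div 2)) / (fact (n * l) * fact n)
           * ((\<Prod>i<n * l. qbin1 q (k - i)) / P ^ n) * y1"
    unfolding XX_def y1_def by (rule fam) (use assms(5) in simp)
  have B: "real (card YY) =
           (fact l ^ m * real q ^ (m * (m - 1) * l^2 div 2)) / (fact (m * l) * fact m)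
           * ((\<Prod>i<m * l. qbin1 q (k - i)) / P ^ m) * y2"
    unfolding YY_def y2_def by (rule fam) (use assms(5) in simp)
  have C: "real (card {Y \<in> YY. X \<union> Y \<in> ZZ}) =
           (fact l ^ m * real q ^ (m * l^2 * (m - 1) div 2 + m * l^2 * n)) / (fact (m * l) * fact m)
           * ((\<Prod>i<m * l. qbin1 q (k - n * l - i)) / P ^ m) * y2" if X: "X \<in> XX" for X
  proof -
    have XS: "X \<subseteq> subspaces_dim l" "card X = n" "vec.dim (\<Union>X) = n * l"
      using X unfolding XX_def indep_family_def by auto
    have eq: "{Y \<in> YY. X \<union> Y \<in> ZZ} = {S. S \<subseteq> (subspaces_dim l :: ('a^'n) set set) \<and> card S = m \<and>
            vec.dim (\<Union>X \<union> \<Union>S) = vec.dim (\<Union>X) + m * l}"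
    proof
      show "{Y \<in> YY. X \<union> Y \<in> ZZ} \<subseteq> {S. S \<subseteq> (subspaces_dim l :: ('a^'n) set set) \<and> card S = m \<and>
            vec.dim (\<Union>X \<union> \<Union>S) = vec.dim (\<Union>X) + m * l}"
        using XS unfolding YY_def ZZ_def indep_family_def by (auto simp: Union_Un_distrib algebra_simps)
    next
      show "{S. S \<subseteq> (subspaces_dim l :: ('a^'n) set set) \<and> card S = m \<and>
            vec.dim (\<Union>X \<union> \<Union>S) = vec.dim (\<Union>X) + m * l} \<subseteq> {Y \<in> YY. X \<union> Y \<in> ZZ}"
      proof
        fix S assume S0: "S \<in> {S. S \<subseteq> (subspaces_dim l :: ('a^'n) set set) \<and> card S = m \<and>
            vec.dim (\<Union>X \<union> \<Union>S) = vec.dim (\<Union>X) + m * l}"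
        then have S: "S \<subseteq> (subspaces_dim l :: ('a^'n) set set)" "card S = m"
          "vec.dim (\<Union>X \<union> \<Union>S) = vec.dim (\<Union>X) + m * l" by auto
        have d1: "vec.dim ({} \<union> \<Union>S) \<le> vec.dim ({} :: ('a^'n) set) + card S * l"
          by (rule dim_Union_le[OF S(1)])
        have d2: "vec.dim (\<Union>X \<union> \<Union>S) \<le> vec.dim (\<Union>X) + vec.dim (\<Union>S)" by (rule dim_Un_le)
        have dS: "vec.dim (\<Union>S) = m * l" using d1 d2 S XS by simp
        have "S \<in> YY" unfolding YY_def indep_family_def using S dS by simp
        moreover have "X \<union> S \<in> ZZ"
        proof -
          have sub: "X \<union> S \<subseteq> subspaces_dim l" using S XS by simp
          have dU: "vec.dim (\<Union>(X \<union> S)) = (n + m) * l" using S XS by (simp add: Union_Un_distrib algebra_simps)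
          have cle: "card (X \<union> S) \<le> n + m" using card_Un_le[of X S] S XS by simp
          have d3: "vec.dim ({} \<union> \<Union>(X \<union> S)) \<le> vec.dim ({} :: ('a^'n) set) + card (X \<union> S) * l"
            by (rule dim_Union_le[OF sub])
          have "card (X \<union> S) = n + m"
          proof (rule ccontr)
            assume "card (X \<union> S) \<noteq> n + m"
            then have "card (X \<union> S) < n + m" using cle by simp
            then have "card (X \<union> S) * l < (n + m) * l" using l by simp
            then show False using d3 dU by simp
          qed
          then show ?thesis unfolding ZZ_def indep_family_def using sub dU by simp
        qed
        ultimately show "S \<in> {Y \<in> YY. X \<union> Y \<in> ZZ}" by simp
      qed
    qed
    have c: "real (card {Y \<in> YY. X \<union> Y \<in> ZZ}) * fact m = (\<Prod>j<m. cnt q k l (n * l + j * l))"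
      using card_F[where W="\<Union>X" and l=l and r=m, OF l] assms(6,7) eq XS(3) by simp
    have ev: "2 * (m * l^2 * (m - 1) div 2 + m * l^2 * n) = 2 * (m * (n * l) * l) + m * (m - 1) * l^2"
    proof -
      have eq1: "m * l^2 * (m - 1) = (m * (m - 1)) * l^2" by (simp only: mult_ac)
      have "2 * (m * l^2 * (m - 1) div 2) = m * l^2 * (m - 1)"
        unfolding eq1 using even_prod_pred[of m] by (simp add: dvd_mult_div_cancel)
      then show ?thesis by (simp add: algebra_simps power2_eq_square)
    qed
    have "real (card {Y \<in> YY. X \<union> Y \<in> ZZ}) =
           (fact l ^ m * real q ^ (m * l^2 * (m - 1) div 2 + m * l^2 * n)) / (fact (m * l) * fact m)
           * ((\<Prod>i<m * l. qbin1 q (k - n * l - i)) / (\<Prod>i<l. qbin1 q (l - i)) ^ m) * (\<Prod>i<m. real ((m - i) * l choose l))"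
      by (rule final_alg[OF Q _ c]) (use assms(5) ev in simp_all)
    then show ?thesis unfolding P_def y2_def by simp
  qed
  show ?thesis using A B C by blast
qed

end
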